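(* Let $l$ be a nonzero natural number. Define $(a_n)_{n\ge 0}$ by $a_0=0$, $a_1=1$, $a_n=l\,a_{n-1}+a_{n-2}$ ($n\ge2$), $(b_n)_{n\ge 0}$ by $b_0=2$, $b_1=l$, $b_n=l\,b_{n-1}+b_{n-2}$ ($n\ge 2$), and let $(f_n)_{n\ge0}$ be the Fibonacci sequence ($f_0=0$, $f_1=1$, $f_n=f_{n-1}+f_{n-2}$). Then for every positive integer $n$: (i) $\mathbb{H}_{\mathbb{Q}}(-1,f_{2n+1})$ splits; (ii) $\mathbb{H}_{\mathbb{Q}}(-1,5f_{2n+1})$ splits; (iii) $\mathbb{H}_{\mathbb{Q}}(-1,a_{2n+1})$ splits; (iv) $\mathbb{H}_{\mathbb{Q}}(-1,(l^2+4)a_{2n+1})$ splits; (v) $\mathbb{H}_{\mathbb{Q}}(-1,f_{2n+1}f_{2n-1})$ splits; (vi) $\mathbb{H}_{\mathbb{Q}}(-1,a_{2n+1}a_{2n-1})$ splits; (vii) $\mathbb{H}_{\mathbb{Q}}(-1,-b_{n+1}b_{n-1})$ is a division algebra; (viii) $\mathbb{H}_{\mathbb{Q}}(1,b_{n+1}b_{n-1})$ splits; (ix) if $l$ is odd and $n\equiv 0\pmod 6$, then $\mathbb{H}_{\mathbb{Q}}(-1,b_{n+1}b_{n-1})$ is a division algebra; (x) if $6\nmid n$ and every prime $p\equiv 3\pmod 4$ dividing $b_{n+1}b_{n-1}$ divides it to an even exponent, then $\mathbb{H}_{\mathbb{Q}}(-1,b_{n+1}b_{n-1})$ splits; (xi)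 if $n\equiv 7\pmod{16}$, then $\mathbb{H}_{\mathbb{Q}}(-9,f_n)$ splits.
   Context: For nonzero rationals $\alpha,\beta$, the generalized quaternion algebra $\mathbb{H}_{\mathbb{Q}}(\alpha,\beta)$ is the $4$-dimensional $\mathbb{Q}$-algebra with basis $1,e_2,e_3,e_4$ and multiplication $e_2^2=\alpha$, $e_3^2=\beta$, $e_2e_3=-e_3e_2=e_4$ (so $e_4^2=-\alpha\beta$, $e_2e_4=\alpha e_3$, $e_3e_4=-\beta e_2$, etc.). It "splits" if it is isomorphic to the matrix algebra $M_2(\mathbb{Q})$, and it is a division algebra if every nonzero element is invertible (equivalently the norm $x_1^2-\alpha x_2^2-\beta x_3^2+\alpha\beta x_4^2$ vanishes only at $0$). *)

theory Defs
  imports "HOL-Analysis.Analysis" "HOL-Number_Theory.Fib"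
begin

text \<open>Elements of the generalized quaternion algebra H_Q(alpha,beta) as coordinate
  vectors (x1,x2,x3,x4) w.r.t. the basis 1, e2, e3, e4.\<close>
type_synonym quat = "rat \<times> rat \<times> rat \<times> rat"

definition qone :: quat where "qone = (1, 0, 0, 0)"

definition qadd :: "quat \<Rightarrow> quat \<Rightarrow> quat" where
  "qadd x y = (case x of (x1, x2, x3, x4) \<Rightarrow> case y of (y1, y2, y3, y4) \<Rightarrow>
     (x1 + y1, x2 + y2, x3 + y3, x4 + y4))"

definition qscale :: "rat \<Rightarrow> quat \<Rightarrow> quat" where
  "qscale c x = (case x of (x1, x2, x3, x4) \<Rightarrow> (c * x1, c * x2, c * x3, c * x4))"

text \<open>Multiplication: e2^2 = alpha, e3^2 = beta, e2 e3 = - e3 e2 = e4, extended bilinearly.\<close>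
definition qmul :: "rat \<Rightarrow> rat \<Rightarrow> quat \<Rightarrow> quat \<Rightarrow> quat" where
  "qmul \<alpha> \<beta> x y = (case x of (x1, x2, x3, x4) \<Rightarrow> case y of (y1, y2, y3, y4) \<Rightarrow>
     (x1*y1 + \<alpha>*x2*y2 + \<beta>*x3*y3 - \<alpha>*\<beta>*x4*y4,
      x1*y2 + x2*y1 - \<beta>*x3*y4 + \<beta>*x4*y3,
      x1*y3 + x3*y1 + \<alpha>*x2*y4 - \<alpha>*x4*y2,
      x1*y4 + x4*y1 + x2*y3 - x3*y2))"

definition quat_splits :: "rat \<Rightarrow> rat \<Rightarrow> bool" where
  "quat_splits \<alpha> \<beta> \<longleftrightarrow> (\<exists>\<phi> :: quat \<Rightarrow> rat^2^2.
      bij \<phi> \<and>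
      (\<forall>x y. \<phi> (qadd x y) = \<phi> x + \<phi> y) \<and>
      (\<forall>c x. \<phi> (qscale c x) = (\<chi> i j. c * (\<phi> x $ i $ j))) \<and>
      (\<forall>x y. \<phi> (qmul \<alpha> \<beta> x y) = \<phi> x ** \<phi> y) \<and>
      \<phi> qone = mat 1)"

definition quat_division :: "rat \<Rightarrow> rat \<Rightarrow> bool" where
  "quat_division \<alpha> \<beta> \<longleftrightarrow>
     (\<forall>x. x \<noteq> (0, 0, 0, 0) \<longrightarrow> (\<exists>y. qmul \<alpha> \<beta> x y = qone \<and> qmul \<alpha> \<beta> y x = qone))"

fun seq_a :: "nat \<Rightarrow> nat \<Rightarrow> nat" where
  "seq_a l 0 = 0"
| "seq_a l (Suc 0) = 1"
| "seq_a l (Suc (Suc n)) = l * seq_a l (Suc n) + seq_a l n"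

fun seq_b :: "nat \<Rightarrow> nat \<Rightarrow> nat" where
  "seq_b l 0 = 2"
| "seq_b l (Suc 0) = l"
| "seq_b l (Suc (Suc n)) = l * seq_b l (Suc n) + seq_b l n"

end

theory Submission
  imports Defs "HOL-Number_Theory.Number_Theory" "HOL-Library.Discrete_Functions"
begin


definition M2 :: "rat \<Rightarrow> rat \<Rightarrow> rat \<Rightarrow> rat \<Rightarrow> rat^2^2" where
  "M2 p q r s = (\<chi> i j. if i = 1 then (if j = 1 then p else q) else (if j = 1 then r else s))"

lemma M2_nth[simp]: "M2 p q r s $ 1 $ 1 = p" "M2 p q r s $ 1 $ 2 = q"
  "M2 p q r s $ 2 $ 1 = r" "M2 p q r s $ 2 $ 2 = s"
  by (simp_all add: M2_def)

lemma M2_eq_iff: "M2 p q r s = M2 p' q' r' s' \<longleftrightarrow> p = p' \<and> q = q' \<and> r = r' \<and> s = s'"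
  by (auto simp: vec_eq_iff forall_2 M2_def)

lemma M2_surj: "A = M2 (A$1$1) (A$1$2) (A$2$1) (A$2$2)"
  by (auto simp: vec_eq_iff forall_2 M2_def)

lemma M2_add: "M2 a b c d + M2 e f g h = M2 (a+e) (b+f) (c+g) (d+h)"
  by (auto simp: vec_eq_iff forall_2 M2_def)

lemma M2_mult: "M2 a b c d ** M2 e f g h = M2 (a*e+b*g) (a*f+b*h) (c*e+d*g) (c*f+d*h)"
  by (auto simp: vec_eq_iff forall_2 matrix_matrix_mult_def sum_2)

lemma M2_scale: "(\<chi> i j. k * (M2 a b c d $ i $ j)) = M2 (k*a) (k*b) (k*c) (k*d)"
  by (auto simp: vec_eq_iff forall_2 M2_def)

lemma M2_one: "mat 1 = M2 1 0 0 1"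
  by (auto simp: vec_eq_iff forall_2 mat_def M2_def)

lemma div_helper: "(d::rat) \<noteq> 0 \<Longrightarrow> N = a*d \<Longrightarrow> N/d = a" by simp

lemma lin_div: "(d::rat) \<noteq> 0 \<Longrightarrow> c1*(X/d) + c2*(Y/d) = (c1*X + c2*Y)/d"
  by (simp add: field_simps)

lemma lin1: "A + B = a \<Longrightarrow> a = (p-s)/2 \<Longrightarrow> (p+s)/2 + A + B = (p::rat)" by (simp add: field_simps)
lemma lin2: "A + B = ab \<Longrightarrow> c = (x+q)/2 \<Longrightarrow> ab = (x-q)/2 \<Longrightarrow> c - A - B = (q::rat)" by (simp add: field_simps)
lemma lin3: "A + B = b \<Longrightarrow> b = (r - Q)/2 \<Longrightarrow> (r+Q)/2 + A + B = (r::rat)" by (simp add: field_simps)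
lemma lin4: "A + B = a \<Longrightarrow> a = (p-s)/2 \<Longrightarrow> (p+s)/2 - A - B = (s::rat)" by (simp add: field_simps)

definition phi :: "rat \<Rightarrow> rat \<Rightarrow> rat \<Rightarrow> quat \<Rightarrow> rat^2^2" where
  "phi \<alpha> u t x = (case x of (x1,x2,x3,x4) \<Rightarrow>
     M2 (x1 + u*x3 + \<alpha> * t * x4) (\<alpha>*x2 - \<alpha> * t * x3 - \<alpha>*u*x4)
        (x2 + t*x3 + u*x4) (x1 - u*x3 - \<alpha> * t * x4))"

definition psi :: "rat \<Rightarrow> rat \<Rightarrow> rat \<Rightarrow> rat^2^2 \<Rightarrow> quat" where
  "psi \<alpha> u t A = (let p = A$1$1; q = A$1$2; r = A$2$1; s = A$2$2;
      a = (p - s)/2; b = (r - q/\<alpha>)/2; d = u*u - \<alpha> * t * t in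
      ((p+s)/2, (r + q/\<alpha>)/2, (u*a - \<alpha> * t * b)/d, (u*b - t*a)/d))"

lemma quat_splits_norm:
  fixes \<alpha> \<beta> u t :: rat
  assumes "\<alpha> \<noteq> 0" "\<beta> \<noteq> 0" "\<beta> = u^2 - \<alpha> * t^2"
  shows "quat_splits \<alpha> \<beta>"
  unfolding quat_splits_def
proof (intro exI[of _ "phi \<alpha> u t"] conjI allI)
  have d: "u*u - \<alpha> * t * t \<noteq> 0" using assms by (simp add: power2_eq_square)
  have l: "psi \<alpha> u t (phi \<alpha> u t x) = x" for x
  proof -
    obtain x1 x2 x3 x4 where x: "x = (x1,x2,x3,x4)" by (cases x) auto
    define d where "d = u*u - \<alpha>*t*t"
    have a: "((x1 + u*x3 + \<alpha>*t*x4) - (x1 - u*x3 - \<alpha>*t*x4))/2 = u*x3 + \<alpha>*t*x4" by simp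
    have b: "((x2 + t*x3 + u*x4) - (\<alpha>*x2 - \<alpha>*t*x3 - \<alpha>*u*x4)/\<alpha>)/2 = t*x3 + u*x4"
      using assms(1) by (simp add: field_simps)
    have c1: "(u*(u*x3 + \<alpha>*t*x4) - \<alpha>*t*(t*x3 + u*x4))/d = x3"
      using d by (simp add: d_def field_simps, (simp add: algebra_simps)?)
    have c2: "(u*(t*x3 + u*x4) - t*(u*x3 + \<alpha>*t*x4))/d = x4"
      using d by (simp add: d_def field_simps, (simp add: algebra_simps)?)
    have f1: "((x1 + u*x3 + \<alpha>*t*x4) + (x1 - u*x3 - \<alpha>*t*x4))/2 = x1" by simp
    have f2: "((x2 + t*x3 + u*x4) + (\<alpha>*x2 - \<alpha>*t*x3 - \<alpha>*u*x4)/\<alpha>)/2 = x2"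
      using assms(1) by (simp add: field_simps)
    show ?thesis unfolding x phi_def psi_def Let_def prod.case M2_nth
      unfolding a b f1 f2 d_def[symmetric] c1 c2 ..
  qed
  have r: "phi \<alpha> u t (psi \<alpha> u t A) = A" for A
  proof -
    define p q r s where "p = A$1$1" and "q = A$1$2" and "r = A$2$1" and "s = A$2$2"
    define a b d where "a = (p - s)/2" and "b = (r - q/\<alpha>)/2" and "d = u*u - \<alpha>*t*t"
    define X3 X4 where "X3 = (u*a - \<alpha>*t*b)/d" and "X4 = (u*b - t*a)/d"
    have ps: "psi \<alpha> u t A = ((p+s)/2, (r + q/\<alpha>)/2, X3, X4)"
      by (simp add: psi_def Let_def p_def q_def r_def s_def a_def b_def d_def X3_def X4_def)
    have dn: "d \<noteq> 0" using d by (simp add: d_def)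
    have e1: "u*X3 + (\<alpha>*t)*X4 = a" unfolding X3_def X4_def
      unfolding lin_div[OF dn] by (rule div_helper[OF dn]) (simp add: d_def algebra_simps)
    have e2: "t*X3 + u*X4 = b" unfolding X3_def X4_def
      unfolding lin_div[OF dn] by (rule div_helper[OF dn]) (simp add: d_def algebra_simps)
    have e2': "\<alpha>*t*X3 + \<alpha>*u*X4 = \<alpha>*b" using e2 by (metis distrib_left mult.assoc)
    have h1: "\<alpha>*((r+q/\<alpha>)/2) = (\<alpha>*r+q)/2" "\<alpha>*b = (\<alpha>*r-q)/2"
      using assms(1) by (simp_all add: b_def field_simps)
    have E1: "(p+s)/2 + u*X3 + \<alpha>*t*X4 = p" by (rule lin1[OF e1 a_def])
    have E2: "\<alpha>*((r+q/\<alpha>)/2) - \<alpha>*t*X3 - \<alpha>*u*X4 = q" by (rule lin2[OF e2' h1])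
    have E3: "(r+q/\<alpha>)/2 + t*X3 + u*X4 = r" by (rule lin3[OF e2 b_def])
    have E4: "(p+s)/2 - u*X3 - \<alpha>*t*X4 = s" by (rule lin4[OF e1 a_def])
    have "phi \<alpha> u t (psi \<alpha> u t A) = M2 p q r s"
      unfolding ps phi_def prod.case E1 E2 E3 E4 ..
    also have "\<dots> = A" by (simp add: p_def q_def r_def s_def M2_surj[symmetric])
    finally show ?thesis .
  qed
  show "bij (phi \<alpha> u t)"
    by (rule o_bij[where g = "psi \<alpha> u t"]) (use l r in auto)
next
  fix x y show "phi \<alpha> u t (qadd x y) = phi \<alpha> u t x + phi \<alpha> u t y"
    by (cases x; cases y) (simp add: phi_def qadd_def M2_add M2_eq_iff algebra_simps)
next
  fix c x show "phi \<alpha> u t (qscale c x) = (\<chi> i j. c * (phi \<alpha> u t x $ i $ j))"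
    by (cases x) (simp add: phi_def qscale_def M2_scale M2_eq_iff algebra_simps)
next
  fix x y show "phi \<alpha> u t (qmul \<alpha> \<beta> x y) = phi \<alpha> u t x ** phi \<alpha> u t y"
    by (cases x; cases y) (simp add: assms(3) phi_def qmul_def M2_mult M2_eq_iff algebra_simps power2_eq_square)
next
  show "phi \<alpha> u t qone = mat 1"
    by (simp add: phi_def qone_def M2_one)
qed


lemma aux41: "(4*(q::int) + 1) mod 4 = 1" by presburger

lemma aux86: "(8*(q::int) + 6) mod 8 = 6" by presburger
lemma aux42: "(4*(q::int) + 2) mod 4 = 2" by presburger

lemma sq_mod4: "(x::int)^2 mod 4 = (if even x then 0 else 1)"
proof (cases "even x")
  case True then obtain k where "x = 2*k" by blast
  then show ?thesis by (simp add: power2_eq_square)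
next
  case False then obtain k where "x = 2*k+1" using oddE by blast
  then have "x^2 = 4*(k*k+k) + 1" by (simp add: power2_eq_square algebra_simps)
  then have "x^2 mod 4 = (4*(k*k+k) + 1) mod 4" by (simp only:)
  also have "\<dots> = 1" by (rule aux41)
  finally show ?thesis using False by simp
qed

lemma sq_mod8_odd: "odd (x::int) \<Longrightarrow> x^2 mod 8 = 1"
proof -
  assume "odd x" then obtain k where k: "x = 2*k+1" using oddE by blast
  have "even (k*(k+1))" by simp
  then obtain j where j: "k*(k+1) = 2*j" by blast
  have "x^2 = 4*(k*(k+1)) + 1" using k by (simp add: power2_eq_square algebra_simps)
  also have "\<dots> = 8*j+1" using j by simp
  finally show ?thesis by simp
qed

lemma sum_sq_mod4: "((x::int)^2 + y^2) mod 4 = (if even x then 0 else 1) + (if even y then 0 else 1)"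
proof -
  have "((x::int)^2 + y^2) mod 4 = (x^2 mod 4 + y^2 mod 4) mod 4" by (rule mod_add_eq[symmetric])
  then show ?thesis by (simp add: sq_mod4)
qed

lemma descent_step:
  fixes x y z w m :: int
  assumes m: "m mod 4 = 3" and eq: "x^2 + y^2 = m*(z^2+w^2)"
  shows "even x \<and> even y \<and> even z \<and> even w"
proof -
  have r4: "(x^2+y^2) mod 4 = ((m mod 4) * ((z^2+w^2) mod 4)) mod 4"
    unfolding eq by (simp add: mod_mult_eq)
  have zw: "even z \<and> even w"
  proof (rule ccontr)
    assume "\<not> (even z \<and> even w)"
    then consider "odd z" "odd w" | "odd z" "even w" | "even z" "odd w" by blast
    then show False
    proof cases
      case 1
      have "(z^2+w^2) mod 8 = (z^2 mod 8 + w^2 mod 8) mod 8" by (rule mod_add_eq[symmetric])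
      then have "(z^2+w^2) mod 8 = 2" using 1 by (simp add: sq_mod8_odd)
      then obtain a where a: "z^2+w^2 = 8*a+2" by (metis div_mod_decomp_int add.commute mult.commute)
      obtain c where c: "m = 4*c+3" using m by (metis div_mod_decomp_int add.commute mult.commute)
      have xy: "x^2+y^2 = (4*c+3)*(8*a+2)" using eq a c by simp
      have "x^2+y^2 = 8*(4*a*c + 3*a + c) + 6" unfolding xy by (simp add: algebra_simps)
      then have h8: "(x^2+y^2) mod 8 = 6" by (simp only: aux86)
      have "x^2+y^2 = 4*(2*(4*a*c + 3*a + c) + 1) + 2" unfolding xy by (simp add: algebra_simps)
      then have "(x^2+y^2) mod 4 = 2" by (simp only: aux42)
      then have "odd x" "odd y" using sum_sq_mod4[of x y] by (auto split: if_splits)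
      moreover have "(x^2+y^2) mod 8 = (x^2 mod 8 + y^2 mod 8) mod 8" by (rule mod_add_eq[symmetric])
      ultimately have "(x^2+y^2) mod 8 = 2" by (simp add: sq_mod8_odd)
      then show False using h8 by simp
    next
      case 2
      then have "(x^2+y^2) mod 4 = 3" using r4 m sum_sq_mod4[of z w] by simp
      then show False using sum_sq_mod4[of x y] by (auto split: if_splits)
    next
      case 3
      then have "(x^2+y^2) mod 4 = 3" using r4 m sum_sq_mod4[of z w] by simp
      then show False using sum_sq_mod4[of x y] by (auto split: if_splits)
    qed
  qed
  then have "(x^2+y^2) mod 4 = 0" using r4 m sum_sq_mod4[of z w] by simp
  then have "even x \<and> even y" using sum_sq_mod4[of x y] by (auto split: if_splits)
  with zw show ?thesis by blast
qed

lemma descent: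
  fixes m :: int
  assumes m: "m mod 4 = 3"
  shows "x^2 + y^2 = m*(z^2+w^2) \<Longrightarrow> z = 0 \<and> w = 0"
proof (induction "nat (z^2+w^2)" arbitrary: x y z w rule: less_induct)
  case less
  show ?case
  proof (rule ccontr)
    assume nz: "\<not> (z = 0 \<and> w = 0)"
    from descent_step[OF m less.prems] obtain x' y' z' w' where
      p: "x = 2*x'" "y = 2*y'" "z = 2*z'" "w = 2*w'" by (meson evenE)
    have eq': "x'^2 + y'^2 = m*(z'^2+w'^2)" using less.prems p by (simp add: power2_eq_square algebra_simps)
    have pos: "z'^2 + w'^2 > 0" using nz p by (auto simp: add_pos_nonneg add_nonneg_pos)
    have "nat (z'^2+w'^2) < nat (z^2+w^2)" using p pos by (simp add: power2_eq_square)
    from less.hyps[OF this eq'] have "z' = 0 \<and> w' = 0" .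
    then show False using nz p by simp
  qed
qed



lemma minus_one_sqrt:
  fixes p :: nat
  assumes p: "prime p" "p mod 4 = 1"
  shows "\<exists>x::int. int p dvd x^2 + 1"
proof -
  have p2: "2 < p" using p prime_ge_2_nat[of p] by (cases "p = 2") auto
  have ev: "even ((p - 1) div 2)"
  proof -
    obtain k where "p = 4*k+1" using p(2) by (metis div_mod_decomp add.commute mult.commute)
    then have "(p - 1) div 2 = 2*k" by simp
    then show ?thesis by simp
  qed
  have "[Legendre (-1) (int p) = (-1) ^ ((p - 1) div 2)] (mod int p)"
    using euler_criterion[OF p(1) p2] .
  then have L: "[Legendre (-1) (int p) = 1] (mod int p)" using ev by simp
  have n0: "\<not> [-1 = 0] (mod int p)"
  proof
    assume "[-1 = 0] (mod int p)"
    then have "int p dvd 1" by (simp add: cong_0_iff)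
    then show False using p2 by simp
  qed
  show ?thesis
  proof (cases "QuadRes (int p) (-1)")
    case True
    then obtain y where "[y^2 = -1] (mod int p)" unfolding QuadRes_def by blast
    then have "[y^2 + 1 = -1 + 1] (mod int p)" by (rule cong_add) simp
    then show ?thesis by (auto simp: cong_0_iff)
  next
    case False
    then have "[-1 = 1] (mod int p)" using L n0 unfolding Legendre_def by simp
    then have "int p dvd 2" by (metis cong_iff_dvd_diff dvd_minus_iff minus_diff_eq one_add_one diff_minus_eq_add)
    then have "p dvd 2" by presburger
    then show ?thesis using p2 by (simp add: nat_dvd_not_less)
  qed
qed

lemma fermat_two_squares:
  fixes p :: nat
  assumes p: "prime p" "p mod 4 = 1"
  shows "\<exists>a b::int. int p = a^2 + b^2"
proof -
  obtain x :: int where x: "int p dvd x^2 + 1" using minus_one_sqrt[OF p] by blast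
  define s where "s = floor_sqrt p"
  have s1: "s^2 \<le> p" unfolding s_def by simp
  have s2: "p < (s+1)^2" unfolding s_def using Suc_floor_sqrt_power2_gt by simp
  have s3: "s^2 \<noteq> p"
  proof
    assume h: "s^2 = p"
    then have "s dvd p" by (metis dvd_triv_left power2_eq_square)
    then have "s = 1 \<or> s = p" using p(1) by (simp add: prime_nat_iff)
    then show False using h p(1) prime_gt_1_nat[OF p(1)]
      by (auto simp: power2_eq_square)
  qed
  define A where "A = {0..s} \<times> {0..s}"
  define f where "f = (\<lambda>(a,b). (int a + x * int b) mod int p)"
  have cA: "card A = (s+1)^2" by (simp add: A_def power2_eq_square)
  have fA: "f ` A \<subseteq> {0..<int p}" unfolding f_def using prime_gt_0_nat[OF p(1)] by auto
  have "card (f ` A) \<le> p" using card_mono[OF _ fA] by simp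
  then have "\<not> inj_on f A" using cA s2 card_image by fastforce
  then obtain a b a' b' where ab: "(a,b) \<in> A" "(a',b') \<in> A" "(a,b) \<noteq> (a',b')"
    "f (a,b) = f (a',b')" unfolding inj_on_def by auto
  define y1 y2 where "y1 = int a - int a'" and "y2 = int b - int b'"
  have "[int a + x * int b = int a' + x * int b'] (mod int p)"
    using ab(4) by (simp add: f_def cong_def)
  then have d1: "int p dvd y1 + x*y2" unfolding y1_def y2_def
    by (simp add: cong_iff_dvd_diff algebra_simps)
  have eq: "y1^2 + y2^2 = (y1 + x*y2)*(y1 - x*y2) + y2^2*(x^2+1)" by (simp add: algebra_simps power2_eq_square)
  have dvv: "int p dvd y1^2 + y2^2" unfolding eq using d1 x by simp
  have nz: "y1^2 + y2^2 > 0" using ab(3) by (auto simp: y1_def y2_def add_pos_nonneg add_nonneg_pos)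
  have "\<bar>y1\<bar> \<le> int s" "\<bar>y2\<bar> \<le> int s" using ab(1,2) by (auto simp: A_def y1_def y2_def)
  then have "y1^2 \<le> int s^2" "y2^2 \<le> int s^2" by (auto simp: abs_le_square_iff[symmetric] intro: power_mono)
  moreover have "int s^2 < int p" using s1 s3 by (metis le_neq_implies_less of_nat_less_iff of_nat_power)
  ultimately have lt: "y1^2 + y2^2 < 2 * int p" by linarith
  obtain k where k: "y1^2 + y2^2 = int p * k" using dvv by blast
  have "k = 1"
  proof -
    have "k > 0" using nz k prime_gt_0_nat[OF p(1)] by (simp add: zero_less_mult_iff)
    moreover have "k < 2" using lt k prime_gt_0_nat[OF p(1)] by (simp add: mult_less_cancel_left)
    ultimately show ?thesis by simp
  qed
  then show ?thesis using k by (metis mult.right_neutral)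
qed

definition sos :: "int \<Rightarrow> bool" where "sos m \<longleftrightarrow> (\<exists>a b. m = a^2 + b^2)"

lemma sos_mult: "sos m \<Longrightarrow> sos n \<Longrightarrow> sos (m*n)"
  unfolding sos_def
proof (elim exE)
  fix a b c d assume "m = a^2 + b^2" "n = c^2 + d^2"
  then have "m*n = (a*c - b*d)^2 + (a*d + b*c)^2" by (simp add: algebra_simps power2_eq_square)
  then show "\<exists>a b. m * n = a^2 + b^2" by blast
qed

lemma sos_sq: "sos (a^2)" unfolding sos_def by (rule exI[of _ a], rule exI[of _ 0]) simp

lemma mult_other:
  fixes q c k :: nat
  assumes "prime q" "prime c" "q \<noteq> c" "k \<noteq> 0"
  shows "multiplicity q (c*k) = multiplicity q k"
  using assms prime_elem_multiplicity_mult_distrib[of q c k] prime_multiplicity_other[of q c]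
  by (simp add: prime_gt_0_nat)

lemma two_squares:
  fixes m :: nat
  shows "m > 0 \<Longrightarrow> (\<forall>p. prime p \<and> p mod 4 = 3 \<and> p dvd m \<longrightarrow> even (multiplicity p m)) \<Longrightarrow> sos (int m)"
proof (induction m rule: less_induct)
  case (less m)
  show ?case
  proof (cases "m = 1")
    case True then show ?thesis unfolding sos_def by (auto intro: exI[of _ 1] exI[of _ 0])
  next
    case False
    then obtain p where p: "prime p" "p dvd m" using prime_factor_nat by blast
    then obtain k where k: "m = p*k" by blast
    have k0: "k > 0" using less.prems(1) k by (cases "k = 0") auto
    have p1: "p > 1" using prime_gt_1_nat[OF p(1)] .
    have kl: "k < m" using k k0 p1 by simp
    have odd_case: "p mod 4 = 1 \<or> p mod 4 = 3" if "p \<noteq> 2"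
    proof -
      have "p > 2" using prime_ge_2_nat[OF p(1)] that by simp
      then have "odd p" using prime_odd_nat[OF p(1)] by simp
      then show ?thesis by presburger
    qed
    have cond_k: "\<forall>q. prime q \<and> q mod 4 = 3 \<and> q dvd k \<longrightarrow> even (multiplicity q k)"
      if "p mod 4 \<noteq> 3" for dummy :: unit
    proof (intro allI impI)
      fix q assume q: "prime q \<and> q mod 4 = 3 \<and> q dvd k"
      then have "q \<noteq> p" using that by auto
      then have "multiplicity q m = multiplicity q k" using k mult_other[of q p k] q p(1) k0 by simp
      moreover have "q dvd m" using q k by simp
      ultimately show "even (multiplicity q k)" using less.prems(2) q by metis
    qed
    show ?thesis
    proof (cases "p mod 4 = 3")
      case False
      have sk: "sos (int k)" using less.IH[OF kl k0 cond_k[OF False]] .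
      have sp: "sos (int p)"
      proof (cases "p = 2")
        case True then show ?thesis unfolding sos_def by (rule_tac exI[of _ 1], rule_tac exI[of _ 1]) simp
      next
        case False2: False
        then have "p mod 4 = 1" using odd_case[OF False2] False by simp
        then show ?thesis using fermat_two_squares[OF p(1)] unfolding sos_def by blast
      qed
      show ?thesis using sos_mult[OF sp sk] k by simp
    next
      case True
      have mp: "multiplicity p m = 1 + multiplicity p k"
        using k prime_elem_multiplicity_mult_distrib[of p p k] p(1) k0 p1 by simp
      have "even (multiplicity p m)" using less.prems(2)[rule_format, of p] True p by simp
      then have "multiplicity p k \<ge> 1" using mp by presburger
      then have "p dvd k" using multiplicity_dvd'[of 1 p k] by simp
      then obtain j where j: "k = p*j" by blast
      have j0: "j > 0" using k0 j by (cases "j = 0") auto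
      have "j < k" using j j0 p1 by simp
      then have jl: "j < m" using kl by simp
      have mm: "m = p^2 * j" using k j by (simp add: power2_eq_square)
      have cond_j: "\<forall>q. prime q \<and> q mod 4 = 3 \<and> q dvd j \<longrightarrow> even (multiplicity q j)"
      proof (intro allI impI)
        fix q assume q: "prime q \<and> q mod 4 = 3 \<and> q dvd j"
        have qm: "q dvd m" using q mm by simp
        show "even (multiplicity q j)"
        proof (cases "q = p")
          case True
          have "multiplicity p m = 2 + multiplicity p j"
            using mm prime_elem_multiplicity_mult_distrib[of p "p^2" j] p(1) j0 p1 by simp
          then show ?thesis using less.prems(2) True q qm by (metis even_add even_numeral)
        next
          case False
          have "multiplicity q m = multiplicity q (p*(p*j))" using k j by simp
          also have "\<dots> = multiplicity q j" using mult_other[of q p j] mult_other[of q p "p*j"] q p(1) j0 False by simp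
          finally show ?thesis using less.prems(2) q qm by metis
        qed
      qed
      have sj: "sos (int j)" using less.IH[OF jl j0 cond_j] .
      show ?thesis using sos_mult[OF sos_sq[of "int p"] sj] mm by simp
    qed
  qed
qed



lemma mod4_lin: "((l::nat)*x + y) mod 4 = ((l mod 4)*(x mod 4) + y mod 4) mod 4"
proof -
  have "(l*x + y) mod 4 = ((l*x) mod 4 + y mod 4) mod 4" by (rule mod_add_eq[symmetric])
  also have "(l*x) mod 4 = ((l mod 4)*(x mod 4)) mod 4" by (rule mod_mult_eq[symmetric])
  also have "(((l mod 4)*(x mod 4)) mod 4 + y mod 4) mod 4 = ((l mod 4)*(x mod 4) + y mod 4) mod 4"
    by (rule mod_add_left_eq)
  finally show ?thesis .
qed

lemma seq_b_rec4: "seq_b l (n+2) mod 4 = ((l mod 4)*(seq_b l (n+1) mod 4) + seq_b l n mod 4) mod 4"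
proof -
  have "seq_b l (n+2) = l * seq_b l (n+1) + seq_b l n"
    by (metis seq_b.simps(3) add_2_eq_Suc' Suc_eq_plus1)
  then show ?thesis using mod4_lin by simp
qed

lemma seq_a_pos: "l > 0 \<Longrightarrow> seq_a l (Suc n) > 0"
  by (induct n rule: fib.induct) auto

lemma seq_b_pos: "l > 0 \<Longrightarrow> seq_b l n > 0"
  by (induct n rule: fib.induct) auto

lemma fib_odd: "fib (2*n+1) = fib (Suc n)^2 + fib n^2"
  using fib_add[of n n] by (simp add: power2_eq_square mult_2)

lemma fib_pos: "fib (Suc n) > 0"
  by (induct n rule: fib.induct) auto

lemma seq_a_add: "seq_a l (Suc (n + k)) = seq_a l (Suc k) * seq_a l (Suc n) + seq_a l k * seq_a l n"
proof (induct n rule: fib.induct)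
  case 1 then show ?case by simp
next
  case 2 then show ?case by (cases k) simp_all
next
  case (3 n)
  have e: "Suc (Suc (Suc n) + k) = Suc (Suc (Suc (n + k)))" by simp
  have "seq_a l (Suc (Suc (Suc n) + k)) = l * seq_a l (Suc (Suc n + k)) + seq_a l (Suc (n + k))"
    unfolding e by simp
  also have "\<dots> = l * (seq_a l (Suc k) * seq_a l (Suc (Suc n)) + seq_a l k * seq_a l (Suc n))
      + (seq_a l (Suc k) * seq_a l (Suc n) + seq_a l k * seq_a l n)"
    using 3 by simp
  also have "\<dots> = seq_a l (Suc k) * (l * seq_a l (Suc (Suc n)) + seq_a l (Suc n))
      + seq_a l k * (l * seq_a l (Suc n) + seq_a l n)" by (simp add: algebra_simps)
  also have "\<dots> = seq_a l (Suc k) * seq_a l (Suc (Suc (Suc n))) + seq_a l k * seq_a l (Suc (Suc n))"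
    by simp
  finally show ?case .
qed

lemma seq_a_odd: "seq_a l (2*n+1) = seq_a l (Suc n)^2 + seq_a l n^2"
  using seq_a_add[of l n n] by (simp add: power2_eq_square mult_2)

lemma seq_b_block:
  assumes L: "l mod 4 = 1 \<or> l mod 4 = 3"
    and h0: "seq_b l m mod 4 = 2" and h1: "seq_b l (m+1) mod 4 = l mod 4"
  shows "seq_b l (m+5) mod 4 = (3*(l mod 4)) mod 4 \<and> seq_b l (m+6) mod 4 = 2 \<and> seq_b l (m+7) mod 4 = l mod 4"
proof -
  define L where "L = l mod 4"
  define c where "c i = seq_b l (m + i) mod 4" for i
  have rc: "c (Suc (Suc i)) = (L * c (Suc i) + c i) mod 4" for i
    using seq_b_rec4[of l "m+i"] unfolding c_def L_def by (simp only: add.assoc Suc_eq_plus1 one_add_one)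
  have c0: "c 0 = 2" using h0 by (simp add: c_def)
  have c1: "c (Suc 0) = L" using h1 by (simp add: c_def L_def)
  have LL: "L = 1 \<or> L = 3" using L by (simp add: L_def)
  note e2 = rc[of 0] and e3 = rc[of "Suc 0"] and e4 = rc[of "Suc (Suc 0)"]
    and e5 = rc[of "Suc (Suc (Suc 0))"] and e6 = rc[of "Suc (Suc (Suc (Suc 0)))"]
    and e7 = rc[of "Suc (Suc (Suc (Suc (Suc 0))))"]
  have c2: "c (Suc (Suc 0)) = 3" using e2 c0 c1 LL by (elim disjE; simp)
  have c3: "c (Suc (Suc (Suc 0))) = 0" using e3 c2 c1 LL by (elim disjE; simp)
  have c4: "c (Suc (Suc (Suc (Suc 0)))) = 3" using e4 c3 c2 LL by (elim disjE; simp)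
  have c5: "c (Suc (Suc (Suc (Suc (Suc 0))))) = (3*L) mod 4" using e5 c4 c3 LL by (elim disjE; simp)
  have c6: "c (Suc (Suc (Suc (Suc (Suc (Suc 0)))))) = 2" using e6 c5 c4 LL by (elim disjE; simp)
  have c7: "c (Suc (Suc (Suc (Suc (Suc (Suc (Suc 0))))))) = L" using e7 c6 c5 LL by (elim disjE; simp)
  have n5: "m + 5 = m + Suc (Suc (Suc (Suc (Suc 0))))" and n6: "m + 6 = m + Suc (Suc (Suc (Suc (Suc (Suc 0)))))"
    and n7: "m + 7 = m + Suc (Suc (Suc (Suc (Suc (Suc (Suc 0))))))" by simp_all
  show ?thesis unfolding n5 n6 n7 using c5 c6 c7 unfolding c_def L_def by simp
qed

lemma seq_b_per6:
  assumes "odd l"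
  shows "seq_b l (6*j) mod 4 = 2 \<and> seq_b l (6*j+1) mod 4 = l mod 4"
proof (induction j)
  case 0 then show ?case by simp
next
  case (Suc j)
  have L: "l mod 4 = 1 \<or> l mod 4 = 3" using assms by presburger
  have "seq_b l (6*j+6) mod 4 = 2 \<and> seq_b l (6*j+7) mod 4 = l mod 4"
    using seq_b_block[OF L] Suc by blast
  then show ?case by (simp add: add.commute)
qed

lemma seq_b_mod4_prod:
  assumes "odd l" "n mod 6 = 0" "n > 0"
  shows "(seq_b l (n+1) * seq_b l (n-1)) mod 4 = 3"
proof -
  define k where "k = n div 6 - 1"
  have k: "n = 6*k+6" using assms(2,3) unfolding k_def by presburger
  have L: "l mod 4 = 1 \<or> l mod 4 = 3" using assms by presburger
  have b: "seq_b l (6*k+5) mod 4 = (3*(l mod 4)) mod 4 \<and> seq_b l (6*k+7) mod 4 = l mod 4"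
    using seq_b_block[OF L] seq_b_per6[OF assms(1), of k] by blast
  have "(seq_b l (n+1) * seq_b l (n-1)) mod 4 = ((seq_b l (6*k+7) mod 4) * (seq_b l (6*k+5) mod 4)) mod 4"
  proof -
    have "n+1 = 6*k+7" "n-1 = 6*k+5" using k by simp_all
    then show ?thesis by (simp only: mod_mult_eq)
  qed
  also have "\<dots> = 3" using b L by auto
  finally show ?thesis .
qed



lemma qmul_scale_right: "qmul \<alpha> \<beta> x (qscale k y) = qscale k (qmul \<alpha> \<beta> x y)"
  by (cases x; cases y) (simp add: qmul_def qscale_def algebra_simps)

lemma qmul_scale_left: "qmul \<alpha> \<beta> (qscale k y) x = qscale k (qmul \<alpha> \<beta> y x)"
  by (cases x; cases y) (simp add: qmul_def qscale_def algebra_simps)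

lemma qmul_conj:
  "qmul \<alpha> \<beta> (x1,x2,x3,x4) (x1,-x2,-x3,-x4) = (x1^2 - \<alpha>*x2^2 - \<beta>*x3^2 + \<alpha>*\<beta>*x4^2, 0, 0, 0)"
  "qmul \<alpha> \<beta> (x1,-x2,-x3,-x4) (x1,x2,x3,x4) = (x1^2 - \<alpha>*x2^2 - \<beta>*x3^2 + \<alpha>*\<beta>*x4^2, 0, 0, 0)"
  by (simp_all add: qmul_def algebra_simps power2_eq_square)

lemma quat_division_norm:
  assumes "\<And>x1 x2 x3 x4. x1^2 - \<alpha>*x2^2 - \<beta>*x3^2 + \<alpha>*\<beta>*x4^2 = 0 \<Longrightarrow> x1 = 0 \<and> x2 = 0 \<and> x3 = 0 \<and> x4 = 0"
  shows "quat_division \<alpha> \<beta>"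
  unfolding quat_division_def
proof (intro allI impI)
  fix x :: quat assume x0: "x \<noteq> (0,0,0,0)"
  obtain x1 x2 x3 x4 where x: "x = (x1,x2,x3,x4)" by (cases x) auto
  define N where "N = x1^2 - \<alpha>*x2^2 - \<beta>*x3^2 + \<alpha>*\<beta>*x4^2"
  have N: "N \<noteq> 0" using assms[of x1 x2 x3 x4] x0 x unfolding N_def by auto
  define y where "y = qscale (1/N) (x1,-x2,-x3,-x4)"
  have o: "qscale (1/N) (N,0,0,0) = qone" using N by (simp add: qscale_def qone_def)
  have "qmul \<alpha> \<beta> x y = qone" unfolding y_def x qmul_scale_right qmul_conj N_def[symmetric] o ..
  moreover have "qmul \<alpha> \<beta> y x = qone" unfolding y_def x qmul_scale_left qmul_conj N_def[symmetric] o ..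
  ultimately show "\<exists>y. qmul \<alpha> \<beta> x y = qone \<and> qmul \<alpha> \<beta> y x = qone" by blast
qed

lemma rat_clear:
  fixes x :: rat
  obtains n d :: int where "d > 0" "x = of_int n / of_int d"
proof -
  obtain n d where q: "quotient_of x = (n, d)" by (cases "quotient_of x") auto
  then have "d > 0" by (rule quotient_of_denom_pos)
  moreover have "x = of_int n / of_int d" using q by (rule quotient_of_div)
  ultimately show ?thesis using that by blast
qed

lemma division_neg:
  fixes c :: rat assumes "c > 0"
  shows "quat_division (-1) (-c)"
proof (rule quat_division_norm)
  fix x1 x2 x3 x4 :: rat
  assume "x1^2 - (-1)*x2^2 - (-c)*x3^2 + (-1)*(-c)*x4^2 = 0"
  then have h: "x1^2 + x2^2 + c*x3^2 + c*x4^2 = 0" by simp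
  have "x1^2 \<ge> 0" "x2^2 \<ge> 0" "c*x3^2 \<ge> 0" "c*x4^2 \<ge> 0" using assms by auto
  then have "x1^2 = 0" "x2^2 = 0" "c*x3^2 = 0" "c*x4^2 = 0" using h by linarith+
  then show "x1 = 0 \<and> x2 = 0 \<and> x3 = 0 \<and> x4 = 0" using assms by simp
qed

lemma division_mod4:
  fixes m :: int assumes m: "m mod 4 = 3"
  shows "quat_division (-1) (of_int m)"
proof (rule quat_division_norm)
  fix x1 x2 x3 x4 :: rat
  assume "x1^2 - (-1)*x2^2 - (of_int m)*x3^2 + (-1)*(of_int m)*x4^2 = 0"
  then have h: "x1^2 + x2^2 = of_int m * (x3^2 + x4^2)" by (simp add: algebra_simps)
  obtain n1 d1 where 1: "d1 > 0" "x1 = of_int n1 / of_int d1" by (rule rat_clear)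
  obtain n2 d2 where 2: "d2 > 0" "x2 = of_int n2 / of_int d2" by (rule rat_clear)
  obtain n3 d3 where 3: "d3 > 0" "x3 = of_int n3 / of_int d3" by (rule rat_clear)
  obtain n4 d4 where 4: "d4 > 0" "x4 = of_int n4 / of_int d4" by (rule rat_clear)
  define D where "D = d1*d2*d3*d4"
  have D0: "D > 0" using 1 2 3 4 by (simp add: D_def)
  define X1 X2 X3 X4 where "X1 = n1*d2*d3*d4" and "X2 = d1*n2*d3*d4" and "X3 = d1*d2*n3*d4" and "X4 = d1*d2*d3*n4"
  have X: "of_int X1 = of_int D * x1" "of_int X2 = of_int D * x2" "of_int X3 = of_int D * x3" "of_int X4 = of_int D * x4"
    using 1 2 3 4 by (simp_all add: X1_def X2_def X3_def X4_def D_def field_simps)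
  have "(of_int (X1^2 + X2^2) :: rat) = of_int D^2 * (x1^2 + x2^2)"
    using X by (simp add: power2_eq_square algebra_simps)
  also have "\<dots> = of_int m * (of_int D^2 * (x3^2 + x4^2))" using h by simp
  also have "\<dots> = of_int (m * (X3^2 + X4^2))" using X by (simp add: power2_eq_square algebra_simps)
  finally have "X1^2 + X2^2 = m * (X3^2 + X4^2)" by (simp only: of_int_eq_iff)
  then have z: "X3 = 0 \<and> X4 = 0" and "X1^2 + X2^2 = 0" using descent[OF m] by auto
  then have "X1 = 0" "X2 = 0" by (auto simp: sum_power2_eq_zero_iff)
  then show "x1 = 0 \<and> x2 = 0 \<and> x3 = 0 \<and> x4 = 0" using X z D0 by auto
qed

lemma splits_sos:
  assumes "sos m" "m \<noteq> 0"
  shows "quat_splits (-1) (of_int m)"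
proof -
  obtain a b where "m = a^2 + b^2" using assms(1) unfolding sos_def by blast
  then have "(of_int m :: rat) = (of_int a)^2 - (-1) * (of_int b)^2" by simp
  then show ?thesis using assms(2) by (intro quat_splits_norm) auto
qed

lemma splits_one:
  assumes "\<beta> \<noteq> 0"
  shows "quat_splits 1 \<beta>"
  by (rule quat_splits_norm[of 1 \<beta> "(\<beta>+1)/2" "(\<beta>-1)/2"]) (use assms in \<open>simp_all add: field_simps power2_eq_square\<close>)



lemma sos_nat: "k = a^2 + b^2 \<Longrightarrow> sos (int k)"
  unfolding sos_def by (rule exI[of _ "int a"], rule exI[of _ "int b"]) simp

lemma splits_nat: "sos (int k) \<Longrightarrow> k \<noteq> 0 \<Longrightarrow> quat_splits (-1) (of_nat k)"
  using splits_sos[of "int k"] by simp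

lemma sos_fib: "sos (int (fib (2*n+1)))" using fib_odd sos_nat by blast
lemma sos_a: "sos (int (seq_a l (2*n+1)))" using seq_a_odd sos_nat by blast

theorem proposition3p4:
  fixes l n :: nat
  assumes "l \<noteq> 0" and "n > 0"
  shows
   "quat_splits (-1) (of_nat (fib (2*n+1))) \<and>
    quat_splits (-1) (5 * of_nat (fib (2*n+1))) \<and>
    quat_splits (-1) (of_nat (seq_a l (2*n+1))) \<and>
    quat_splits (-1) ((of_nat l ^ 2 + 4) * of_nat (seq_a l (2*n+1))) \<and>
    quat_splits (-1) (of_nat (fib (2*n+1) * fib (2*n-1))) \<and>
    quat_splits (-1) (of_nat (seq_a l (2*n+1) * seq_a l (2*n-1))) \<and>
    quat_division (-1) (- of_nat (seq_b l (n+1) * seq_b l (n-1))) \<and>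
    quat_splits 1 (of_nat (seq_b l (n+1) * seq_b l (n-1))) \<and>
    (odd l \<and> n mod 6 = 0 \<longrightarrow> quat_division (-1) (of_nat (seq_b l (n+1) * seq_b l (n-1)))) \<and>
    (\<not> 6 dvd n \<and>
     (\<forall>p::nat. prime p \<and> p mod 4 = 3 \<and> p dvd seq_b l (n+1) * seq_b l (n-1)
        \<longrightarrow> even (multiplicity p (seq_b l (n+1) * seq_b l (n-1))))
     \<longrightarrow> quat_splits (-1) (of_nat (seq_b l (n+1) * seq_b l (n-1)))) \<and>
    (n mod 16 = 7 \<longrightarrow> quat_splits (-9) (of_nat (fib n)))"
proof -
  have l0: "l > 0" using assms(1) by simp
  obtain k where nk: "n = Suc k" using assms(2) gr0_implies_Suc by blast
  have idx: "2*n - 1 = 2*k+1" using nk by simp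
  have f0: "fib (2*n+1) \<noteq> 0" using fib_pos[of "2*n"] by simp
  have f0': "fib (2*n-1) \<noteq> 0" unfolding idx using fib_pos[of "2*k"] by simp
  have a0: "seq_a l (2*n+1) \<noteq> 0" using seq_a_pos[OF l0, of "2*n"] by simp
  have a0': "seq_a l (2*n-1) \<noteq> 0" unfolding idx using seq_a_pos[OF l0, of "2*k"] by simp
  define B where "B = seq_b l (n+1) * seq_b l (n-1)"
  have B0: "B > 0" unfolding B_def using seq_b_pos[OF l0] by simp
  have i: "quat_splits (-1) (of_nat (fib (2*n+1)))" using splits_nat[OF sos_fib f0] .
  have ii: "quat_splits (-1) (5 * of_nat (fib (2*n+1)))"
  proof -
    have "sos (int (5 * fib (2*n+1)))" using sos_mult[OF sos_nat[of 5 1 2] sos_fib] by simp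
    from splits_nat[OF this] f0 show ?thesis by simp
  qed
  have iii: "quat_splits (-1) (of_nat (seq_a l (2*n+1)))" using splits_nat[OF sos_a a0] .
  have iv: "quat_splits (-1) ((of_nat l ^ 2 + 4) * of_nat (seq_a l (2*n+1)))"
  proof -
    have "sos (int ((l^2+4) * seq_a l (2*n+1)))" using sos_mult[OF sos_nat[of "l^2+4" l 2] sos_a] by simp
    from splits_nat[OF this] a0 show ?thesis by simp
  qed
  have v: "quat_splits (-1) (of_nat (fib (2*n+1) * fib (2*n-1)))"
  proof -
    have "sos (int (fib (2*n+1) * fib (2*n-1)))" unfolding idx using sos_mult[OF sos_fib sos_fib] by simp
    from splits_nat[OF this] f0 f0' show ?thesis by simp
  qed
  have vi: "quat_splits (-1) (of_nat (seq_a l (2*n+1) * seq_a l (2*n-1)))"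
  proof -
    have "sos (int (seq_a l (2*n+1) * seq_a l (2*n-1)))" unfolding idx using sos_mult[OF sos_a sos_a] by simp
    from splits_nat[OF this] a0 a0' show ?thesis by simp
  qed
  have vii: "quat_division (-1) (- of_nat B)" using division_neg[of "of_nat B"] B0 by simp
  have viii: "quat_splits 1 (of_nat B)" using splits_one[of "of_nat B"] B0 by simp
  have ix: "odd l \<and> n mod 6 = 0 \<longrightarrow> quat_division (-1) (of_nat B)"
  proof
    assume h: "odd l \<and> n mod 6 = 0"
    have "B mod 4 = 3" unfolding B_def using seq_b_mod4_prod[of l n] h assms(2) by simp
    then have "int B mod 4 = 3" by (metis of_nat_numeral zmod_int)
    from division_mod4[OF this] show "quat_division (-1) (of_nat B)" by simp
  qed
  have x: "\<not> 6 dvd n \<and> (\<forall>p::nat. prime p \<and> p mod 4 = 3 \<and> p dvd B \<longrightarrow> even (multiplicity p B))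
     \<longrightarrow> quat_splits (-1) (of_nat B)"
  proof
    assume h: "\<not> 6 dvd n \<and> (\<forall>p::nat. prime p \<and> p mod 4 = 3 \<and> p dvd B \<longrightarrow> even (multiplicity p B))"
    have "sos (int B)" using two_squares[OF B0] h by blast
    from splits_nat[OF this] B0 show "quat_splits (-1) (of_nat B)" by simp
  qed
  have xi: "n mod 16 = 7 \<longrightarrow> quat_splits (-9) (of_nat (fib n))"
  proof
    assume h: "n mod 16 = 7"
    define j where "j = n div 2"
    have nj: "n = 2*j+1" using h unfolding j_def by presburger
    have e: "fib n = fib (Suc j)^2 + fib j^2" unfolding nj by (rule fib_odd)
    have fn0: "fib n \<noteq> 0" using nj fib_pos[of "2*j"] by simp
    have "(of_nat (fib n) :: rat) = (of_nat (fib (Suc j)))^2 - (-9) * (of_nat (fib j) / 3)^2"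
      unfolding e by (simp add: power2_eq_square)
    then show "quat_splits (-9) (of_nat (fib n))"
      using fn0 by (intro quat_splits_norm) auto
  qed
  show ?thesis using i ii iii iv v vi vii viii ix x xi unfolding B_def by blast
qed

end
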